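(* Let $S=(n,\phi,F)$ be a semicoherent system whose joint lifetime distribution $F$ has no ties, and let $T$ be the system lifetime. Then for every $j\in[n]$, $$I_{\mathrm{BP}}^{(j)}:=\Pr(T=X_j)=\sum_{A\subseteq[n]\setminus\{j\}}q_j(A)\,\big(\phi(A\cup\{j\})-\phi(A)\big)=\sum_{A\subseteq[n]}(-1)^{|\{j\}\setminus A|}\,q_j(A\setminus\{j\})\,\phi(A).$$
   Context: $[n]=\{1,\ldots,n\}$. Boolean vectors $\mathbf{x}\in\{0,1\}^n$ are identified with subsets $A\subseteq[n]$ via $x_i=1\iff i\in A$, so $\phi$ is viewed both as a function on $\{0,1\}^n$ and on $2^{[n]}$. A semicoherent system $S=(n,\phi,F)$ consists of a structure function $\phi:\{0,1\}^n\to\{0,1\}$ that is nondecreasing in each variable with $\phi(\varnothing)=0$, $\phi([n])=1$, and the joint c.d.f. $F$ of nonnegative component lifetimes $X_1,\ldots,X_n$. $F$ has no ties if $\Pr(X_i=X_k)=0$ for all $i\neq k$. At time $t$ component $i$ is working iff $X_i>t$; the system lifetime is $T=\inf\{t\geq0:\phi(\{i: X_i>t\})=0\}$. For $j\in[n]$, $A\subseteq[n]\setminus\{j\}$: $q_j(A)=\Pr\big(\max_{i\notin A\cup\{j\}}X_i<X_j<\min_{i\in A}X_i\big)$ (max over empty set $=-\infty$, min over empty set $=+\infty$). *)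

theory Defs
  imports "HOL-Probability.Probability"
begin

text \<open>A structure function on subsets of [n] = {1..n} (identified with Boolean vectors).
  Semicoherence: nondecreasing, phi of the empty set is 0, phi of [n] is 1.\<close>
definition semicoherent :: "nat \<Rightarrow> (nat set \<Rightarrow> bool) \<Rightarrow> bool" where
  "semicoherent n phi \<longleftrightarrow>
     (\<forall>A B. A \<subseteq> B \<and> B \<subseteq> {1..n} \<longrightarrow> phi A \<longrightarrow> phi B) \<and>
     \<not> phi {} \<and> phi {1..n}"

definition system_lifetime ::
    "nat \<Rightarrow> (nat set \<Rightarrow> bool) \<Rightarrow> (nat \<Rightarrow> 'a \<Rightarrow> real) \<Rightarrow> 'a \<Rightarrow> real" where
  "system_lifetime n phi X \<omega> =
     Inf {t. 0 \<le> t \<and> \<not> phi {i \<in> {1..n}. X i \<omega> > t}}"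

definition qj ::
    "'a measure \<Rightarrow> nat \<Rightarrow> (nat \<Rightarrow> 'a \<Rightarrow> real) \<Rightarrow> nat \<Rightarrow> nat set \<Rightarrow> real" where
  "qj M n X j A = measure M {\<omega> \<in> space M.
      (\<forall>i \<in> {1..n} - (A \<union> {j}). X i \<omega> < X j \<omega>) \<and> (\<forall>i \<in> A. X j \<omega> < X i \<omega>)}"

end

theory Submission
  imports Defs
begin

lemma lifetime_char:
  fixes x :: "nat \<Rightarrow> real" and phi :: "nat set \<Rightarrow> bool"
  assumes phi0: "\<not> phi {}"
  shows "Inf {t. 0 \<le> t \<and> \<not> phi {i\<in>{1..n}. x i > t}} = y \<longleftrightarrow>
     (0 \<le> y \<and> \<not> phi {i\<in>{1..n}. x i > y} \<and> (\<not> phi {i\<in>{1..n}. x i > 0} \<longrightarrow> y \<le> 0) \<and>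
      (\<forall>i\<in>{1..n}. 0 \<le> x i \<and> \<not> phi {k\<in>{1..n}. x k > x i} \<longrightarrow> y \<le> x i))"
proof -
  define W where "W = (\<lambda>t. {i\<in>{1..n}. x i > t})"
  define S where "S = {t. 0 \<le> t \<and> \<not> phi (W t)}"
  define C where "C = insert 0 (x ` {i\<in>{1..n}. 0 \<le> x i})"
  have finC: "finite C" unfolding C_def by auto
  have C0: "\<And>c. c \<in> C \<Longrightarrow> 0 \<le> c" unfolding C_def by auto
  have red: "\<exists>c\<in>C. c \<le> t \<and> c \<in> S" if tS: "t \<in> S" for t
  proof -
    define c where "c = Max {c\<in>C. c \<le> t}"
    have t0: "0 \<le> t" using tS S_def by auto
    have fin: "finite {c\<in>C. c \<le> t}" using finC by auto
    have ne: "0 \<in> {c\<in>C. c \<le> t}" using t0 C_def by auto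
    have cin: "c \<in> {c\<in>C. c \<le> t}" unfolding c_def using fin ne by (intro Max_in) auto
    have cmax: "\<And>d. d \<in> C \<Longrightarrow> d \<le> t \<Longrightarrow> d \<le> c" unfolding c_def using fin by auto
    have "W c = W t"
    proof -
      have "x k > c \<longleftrightarrow> x k > t" if k: "k \<in> {1..n}" for k
      proof
        assume a: "x k > c"
        show "x k > t"
        proof (rule ccontr)
          assume "\<not> x k > t"
          moreover have "0 \<le> x k" using a C0 cin by force
          ultimately have "x k \<in> C" "x k \<le> t" using k C_def by auto
          then show False using cmax a by force
        qed
      next
        assume "x k > t" then show "x k > c" using cin by auto
      qed
      then show ?thesis unfolding W_def by auto
    qed
    then show ?thesis using cin tS C0 unfolding S_def by auto
  qed
  define t0 where "t0 = Max (insert 0 (x ` {1..n}))"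
  have "t0 \<in> S"
  proof -
    have "0 \<le> t0" unfolding t0_def by simp
    moreover have "W t0 = {}" unfolding W_def t0_def by (auto simp: not_less)
    ultimately show ?thesis using phi0 S_def by auto
  qed
  then obtain c0 where c0: "c0 \<in> C \<inter> S" using red by blast
  define m where "m = Min (C \<inter> S)"
  have mCS: "m \<in> C \<inter> S" unfolding m_def using finC c0 by (intro Min_in) auto
  have mle: "\<And>t. t \<in> S \<Longrightarrow> m \<le> t"
  proof -
    fix t assume "t \<in> S"
    then obtain c where "c \<in> C" "c \<le> t" "c \<in> S" using red by blast
    then have "m \<le> c" unfolding m_def using finC by auto
    then show "m \<le> t" using \<open>c \<le> t\<close> by simp
  qed
  have InfS: "Inf S = m" using mCS mle by (intro cInf_eq_minimum) auto
  have "Inf S = y \<longleftrightarrow> y \<in> S \<and> (\<forall>t\<in>S. y \<le> t)"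
    using InfS mCS mle by (auto intro: order.antisym)
  also have "\<dots> \<longleftrightarrow> y \<in> S \<and> (\<forall>c\<in>C\<inter>S. y \<le> c)"
    using red by (meson IntD2 IntI order_trans)
  also have "\<dots> \<longleftrightarrow> (0 \<le> y \<and> \<not> phi (W y) \<and> (\<not> phi (W 0) \<longrightarrow> y \<le> 0) \<and>
      (\<forall>i\<in>{1..n}. 0 \<le> x i \<and> \<not> phi (W (x i)) \<longrightarrow> y \<le> x i))"
    unfolding S_def C_def by auto
  finally show ?thesis unfolding S_def W_def by simp
qed

lemma char_good:
  fixes x :: "nat \<Rightarrow> real" and phi :: "nat set \<Rightarrow> bool"
  assumes mono: "\<forall>A B. A \<subseteq> B \<and> B \<subseteq> {1..n} \<longrightarrow> phi A \<longrightarrow> phi B"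
    and phin: "phi {1..n}" and j: "j \<in> {1..n}"
    and nonneg: "\<forall>i\<in>{1..n}. 0 \<le> x i"
    and dist: "\<forall>i\<in>{1..n}. \<forall>k\<in>{1..n}. i \<noteq> k \<longrightarrow> x i \<noteq> x k"
  shows "(0 \<le> x j \<and> \<not> phi {i\<in>{1..n}. x i > x j} \<and> (\<not> phi {i\<in>{1..n}. x i > 0} \<longrightarrow> x j \<le> 0) \<and>
      (\<forall>i\<in>{1..n}. 0 \<le> x i \<and> \<not> phi {k\<in>{1..n}. x k > x i} \<longrightarrow> x j \<le> x i))
   \<longleftrightarrow> (\<exists>A\<in>Pow ({1..n}-{j}). phi (A \<union> {j}) \<and> \<not> phi A \<and>
          (\<forall>i\<in>{1..n}-(A\<union>{j}). x i < x j) \<and> (\<forall>i\<in>A. x j < x i))"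
proof -
  define A0 where "A0 = {i\<in>{1..n}-{j}. x i > x j}"
  have WA0: "{i\<in>{1..n}. x i > x j} = A0" unfolding A0_def by auto
  have A0sub: "A0 \<union> {j} \<subseteq> {1..n}" using j A0_def by auto
  have mid: "((\<not> phi {i\<in>{1..n}. x i > 0} \<longrightarrow> x j \<le> 0) \<and>
      (\<forall>i\<in>{1..n}. 0 \<le> x i \<and> \<not> phi {k\<in>{1..n}. x k > x i} \<longrightarrow> x j \<le> x i))
      \<longleftrightarrow> phi (A0 \<union> {j})"
  proof
    assume h: "((\<not> phi {i\<in>{1..n}. x i > 0} \<longrightarrow> x j \<le> 0) \<and>
      (\<forall>i\<in>{1..n}. 0 \<le> x i \<and> \<not> phi {k\<in>{1..n}. x k > x i} \<longrightarrow> x j \<le> x i))"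
    define L where "L = {i\<in>{1..n}. x i < x j}"
    show "phi (A0 \<union> {j})"
    proof (cases "L = {}")
      case True
      have "A0 \<union> {j} = {1..n}"
      proof
        show "{1..n} \<subseteq> A0 \<union> {j}"
        proof
          fix i assume i: "i \<in> {1..n}"
          show "i \<in> A0 \<union> {j}"
          proof (cases "i = j")
            case False
            then have "x i \<noteq> x j" using dist i j by auto
            moreover have "\<not> x i < x j" using True i L_def by auto
            ultimately show ?thesis using i False A0_def by auto
          qed simp
        qed
      qed (use A0sub in auto)
      then show ?thesis using phin by simp
    next
      case False
      have finL: "finite L" unfolding L_def by auto
      define mx where "mx = Max (x ` L)"
      have "mx \<in> x ` L" unfolding mx_def using finL False by (intro Max_in) auto
      then obtain i0 where i0: "i0 \<in> L" "x i0 = mx" by auto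
      have mxge: "\<And>i. i \<in> L \<Longrightarrow> x i \<le> mx" unfolding mx_def using finL by auto
      have i0n: "i0 \<in> {1..n}" and lt: "x i0 < x j" using i0 L_def by auto
      have W: "{k\<in>{1..n}. x k > x i0} = A0 \<union> {j}"
      proof
        show "A0 \<union> {j} \<subseteq> {k\<in>{1..n}. x k > x i0}" using lt j A0_def by auto
        show "{k\<in>{1..n}. x k > x i0} \<subseteq> A0 \<union> {j}"
        proof
          fix k assume k: "k \<in> {k\<in>{1..n}. x k > x i0}"
          show "k \<in> A0 \<union> {j}"
          proof (cases "k = j")
            case False
            then have "x k \<noteq> x j" using dist k j by auto
            moreover have "\<not> x k < x j"
            proof
              assume "x k < x j"
              then have "k \<in> L" using k L_def by auto
              then show False using mxge i0 k by force
            qed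
            ultimately show ?thesis using k False A0_def by auto
          qed simp
        qed
      qed
      have "0 \<le> x i0" using nonneg i0n by auto
      then show ?thesis using h i0n lt W by force
    qed
  next
    assume p: "phi (A0 \<union> {j})"
    have 1: "phi {i\<in>{1..n}. x i > 0}" if "x j > 0"
    proof -
      have "A0 \<union> {j} \<subseteq> {i\<in>{1..n}. x i > 0}" using that j A0_def by auto
      then show ?thesis using mono p by blast
    qed
    have 2: "phi {k\<in>{1..n}. x k > x i}" if "i \<in> {1..n}" "x i < x j" for i
    proof -
      have "A0 \<union> {j} \<subseteq> {k\<in>{1..n}. x k > x i}" using that j A0_def by auto
      then show ?thesis using mono p by blast
    qed
    show "((\<not> phi {i\<in>{1..n}. x i > 0} \<longrightarrow> x j \<le> 0) \<and>
      (\<forall>i\<in>{1..n}. 0 \<le> x i \<and> \<not> phi {k\<in>{1..n}. x k > x i} \<longrightarrow> x j \<le> x i))"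
      using 1 2 by (meson not_le)
  qed
  have rhs: "(\<exists>A\<in>Pow ({1..n}-{j}). phi (A \<union> {j}) \<and> \<not> phi A \<and>
          (\<forall>i\<in>{1..n}-(A\<union>{j}). x i < x j) \<and> (\<forall>i\<in>A. x j < x i))
     \<longleftrightarrow> phi (A0 \<union> {j}) \<and> \<not> phi A0"
  proof
    assume "\<exists>A\<in>Pow ({1..n}-{j}). phi (A \<union> {j}) \<and> \<not> phi A \<and>
          (\<forall>i\<in>{1..n}-(A\<union>{j}). x i < x j) \<and> (\<forall>i\<in>A. x j < x i)"
    then obtain A where A: "A \<subseteq> {1..n}-{j}" "phi (A \<union> {j})" "\<not> phi A"
      "\<forall>i\<in>{1..n}-(A\<union>{j}). x i < x j" "\<forall>i\<in>A. x j < x i" by auto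
    have "A = A0"
    proof
      show "A \<subseteq> A0" using A(1,5) unfolding A0_def by auto
      show "A0 \<subseteq> A"
      proof
        fix i assume i: "i \<in> A0"
        show "i \<in> A"
        proof (rule ccontr)
          assume "i \<notin> A"
          then have "i \<in> {1..n}-(A\<union>{j})" using i A0_def by auto
          then have "x i < x j" using A(4) by blast
          then show False using i A0_def by auto
        qed
      qed
    qed
    then show "phi (A0 \<union> {j}) \<and> \<not> phi A0" using A by simp
  next
    assume h: "phi (A0 \<union> {j}) \<and> \<not> phi A0"
    have "\<forall>i\<in>{1..n}-(A0\<union>{j}). x i < x j"
    proof
      fix i assume i: "i \<in> {1..n}-(A0\<union>{j})"
      then have "x i \<noteq> x j" using dist j by auto
      then show "x i < x j" using i A0_def by auto
    qed
    then show "\<exists>A\<in>Pow ({1..n}-{j}). phi (A \<union> {j}) \<and> \<not> phi A \<and>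
          (\<forall>i\<in>{1..n}-(A\<union>{j}). x i < x j) \<and> (\<forall>i\<in>A. x j < x i)"
      using h by (intro bexI[of _ A0]) (auto simp: A0_def)
  qed
  have "0 \<le> x j" using nonneg j by blast
  then show ?thesis unfolding rhs WA0 using mid by blast
qed

lemma pless: "f \<in> borel_measurable M \<Longrightarrow> g \<in> borel_measurable M \<Longrightarrow> Measurable.pred M (\<lambda>w. f w < (g w::real))"
  by measurable
lemma ple: "f \<in> borel_measurable M \<Longrightarrow> g \<in> borel_measurable M \<Longrightarrow> Measurable.pred M (\<lambda>w. f w \<le> (g w::real))"
  unfolding Measurable.pred_def by (rule borel_measurable_le)

lemma pred_phi:
  assumes "finite I" "\<And>k. k \<in> I \<Longrightarrow> Measurable.pred M (P k)"
  shows "Measurable.pred M (\<lambda>\<omega>. phi {k\<in>I. P k \<omega>})"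
proof -
  have eq: "(\<lambda>\<omega>. phi {k\<in>I. P k \<omega>}) = (\<lambda>\<omega>. \<exists>B\<in>Pow I. phi B \<and> (\<forall>k\<in>I. (k\<in>B) = P k \<omega>))"
  proof (intro ext iffI)
    fix \<omega> assume "phi {k\<in>I. P k \<omega>}"
    then show "\<exists>B\<in>Pow I. phi B \<and> (\<forall>k\<in>I. (k\<in>B) = P k \<omega>)"
      by (intro bexI[of _ "{k\<in>I. P k \<omega>}"]) auto
  next
    fix \<omega> assume "\<exists>B\<in>Pow I. phi B \<and> (\<forall>k\<in>I. (k\<in>B) = P k \<omega>)"
    then obtain B where "B \<subseteq> I" "phi B" "\<forall>k\<in>I. (k\<in>B) = P k \<omega>" by auto
    moreover then have "B = {k\<in>I. P k \<omega>}" by auto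
    ultimately show "phi {k\<in>I. P k \<omega>}" by simp
  qed
  show ?thesis unfolding eq using assms
    by (intro pred_intros_finite pred_intros_logic; simp)
qed

lemma sum_Pow_insert:
  fixes f :: "nat set \<Rightarrow> real"
  assumes "finite R" "a \<notin> R"
  shows "(\<Sum>A\<in>Pow (insert a R). f A) = (\<Sum>A\<in>Pow R. f A) + (\<Sum>A\<in>Pow R. f (insert a A))"
proof -
  have "(\<Sum>A\<in>Pow (insert a R). f A) = (\<Sum>A\<in>Pow R. f A) + (\<Sum>A\<in>insert a ` Pow R. f A)"
    unfolding Pow_insert by (rule sum.union_disjoint) (use assms in auto)
  also have "(\<Sum>A\<in>insert a ` Pow R. f A) = (\<Sum>A\<in>Pow R. f (insert a A))"
  proof (rule sum.reindex[unfolded comp_def])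
    show "inj_on (insert a) (Pow R)" using assms(2) unfolding inj_on_def
      by (metis Pow_iff insert_ident subset_iff)
  qed
  finally show ?thesis .
qed

theorem theorem3:
  fixes M :: "'a measure" and n :: nat and phi :: "nat set \<Rightarrow> bool"
    and X :: "nat \<Rightarrow> 'a \<Rightarrow> real" and j :: nat
  assumes "prob_space M"
    and "\<And>i. i \<in> {1..n} \<Longrightarrow> X i \<in> borel_measurable M"
    and "\<And>i. i \<in> {1..n} \<Longrightarrow> AE \<omega> in M. 0 \<le> X i \<omega>"
    and "semicoherent n phi"
    and "\<And>i k. i \<in> {1..n} \<Longrightarrow> k \<in> {1..n} \<Longrightarrow> i \<noteq> k \<Longrightarrow>
            measure M {\<omega> \<in> space M. X i \<omega> = X k \<omega>} = 0"
    and "j \<in> {1..n}"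
  shows "measure M {\<omega> \<in> space M. system_lifetime n phi X \<omega> = X j \<omega>}
           = (\<Sum>A \<in> Pow ({1..n} - {j}).
                qj M n X j A * (of_bool (phi (A \<union> {j})) - of_bool (phi A)))
       \<and> (\<Sum>A \<in> Pow ({1..n} - {j}).
                qj M n X j A * (of_bool (phi (A \<union> {j})) - of_bool (phi A)))
           = (\<Sum>A \<in> Pow {1..n}.
                (-1) ^ card ({j} - A) * qj M n X j (A - {j}) * of_bool (phi A))"
proof -
  interpret prob_space M by fact
  note Xm = assms(2)
  note j = assms(6)
  have mono: "\<forall>A B. A \<subseteq> B \<and> B \<subseteq> {1..n} \<longrightarrow> phi A \<longrightarrow> phi B"
    and phi0: "\<not> phi {}" and phin: "phi {1..n}"
    using assms(4) unfolding semicoherent_def by auto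
  define Q where "Q = (\<lambda>\<omega>. 0 \<le> X j \<omega> \<and> \<not> phi {i\<in>{1..n}. X i \<omega> > X j \<omega>} \<and>
     (\<not> phi {i\<in>{1..n}. X i \<omega> > 0} \<longrightarrow> X j \<omega> \<le> 0) \<and>
     (\<forall>i\<in>{1..n}. 0 \<le> X i \<omega> \<and> \<not> phi {k\<in>{1..n}. X k \<omega> > X i \<omega>} \<longrightarrow> X j \<omega> \<le> X i \<omega>))"
  have evT: "{\<omega> \<in> space M. system_lifetime n phi X \<omega> = X j \<omega>} = {\<omega> \<in> space M. Q \<omega>}"
  proof (rule Collect_cong)
    fix \<omega>
    show "(\<omega> \<in> space M \<and> system_lifetime n phi X \<omega> = X j \<omega>) = (\<omega> \<in> space M \<and> Q \<omega>)"
      unfolding system_lifetime_def Q_def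
      by (simp only: lifetime_char[where phi=phi and n=n and x="\<lambda>i. X i \<omega>" and y="X j \<omega>", OF phi0])
  qed
  have Qm: "Measurable.pred M Q"
    unfolding Q_def
    by (intro pred_intros_finite pred_intros_logic pred_phi pless ple Xm j borel_measurable_const;
        auto intro!: pless ple Xm borel_measurable_const j)
  define E where "E = (\<lambda>A. {\<omega>\<in>space M. (\<forall>i\<in>{1..n}-(A\<union>{j}). X i \<omega> < X j \<omega>) \<and> (\<forall>i\<in>A. X j \<omega> < X i \<omega>)})"
  have qjE: "\<And>A. qj M n X j A = measure M (E A)" by (simp add: qj_def E_def)
  define P where "P = {A\<in>Pow ({1..n}-{j}). phi (A \<union> {j}) \<and> \<not> phi A}"
  have finP: "finite P" unfolding P_def by auto
  have Em: "E A \<in> sets M" if "A \<in> P" for A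
  proof -
    have A: "A \<subseteq> {1..n}" using that P_def by auto
    then have fA: "finite A" using finite_subset by blast
    have "Measurable.pred M (\<lambda>\<omega>. (\<forall>i\<in>{1..n}-(A\<union>{j}). X i \<omega> < X j \<omega>) \<and> (\<forall>i\<in>A. X j \<omega> < X i \<omega>))"
      using fA A by (intro pred_intros_finite pred_intros_logic; auto intro!: pless Xm j)
    then show ?thesis unfolding E_def by (rule predE)
  qed
  have Eeq: "A = {i\<in>{1..n}-{j}. X i \<omega> > X j \<omega>}" if "A \<subseteq> {1..n}-{j}" "\<omega> \<in> E A" for A \<omega>
  proof
    show "A \<subseteq> {i\<in>{1..n}-{j}. X i \<omega> > X j \<omega>}" using that unfolding E_def by auto
    show "{i\<in>{1..n}-{j}. X i \<omega> > X j \<omega>} \<subseteq> A"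
    proof
      fix i assume i: "i \<in> {i\<in>{1..n}-{j}. X i \<omega> > X j \<omega>}"
      show "i \<in> A"
      proof (rule ccontr)
        assume "i \<notin> A"
        then have "i \<in> {1..n}-(A\<union>{j})" using i by auto
        then have "X i \<omega> < X j \<omega>" using that(2) unfolding E_def by blast
        then show False using i by auto
      qed
    qed
  qed
  have disj: "disjoint_family_on E P"
    unfolding disjoint_family_on_def
  proof (intro ballI impI)
    fix A B assume AB: "A \<in> P" "B \<in> P" "A \<noteq> B"
    show "E A \<inter> E B = {}"
    proof (rule ccontr)
      assume "E A \<inter> E B \<noteq> {}"
      then obtain \<omega> where "\<omega> \<in> E A" "\<omega> \<in> E B" by auto
      then have "A = B" using Eeq[of A \<omega>] Eeq[of B \<omega>] AB unfolding P_def by simp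
      then show False using AB by simp
    qed
  qed
  have U: "measure M (\<Union>A\<in>P. E A) = (\<Sum>A\<in>P. measure M (E A))"
    using finP Em disj by (intro measure_finite_Union) (auto simp: emeasure_eq_measure)
  have AEnn: "AE \<omega> in M. \<forall>i\<in>{1..n}. 0 \<le> X i \<omega>"
    using assms(3) by (intro eventually_ball_finite) auto
  have AEd: "AE \<omega> in M. \<forall>i\<in>{1..n}. \<forall>k\<in>{1..n}. i \<noteq> k \<longrightarrow> X i \<omega> \<noteq> X k \<omega>"
  proof (intro eventually_ball_finite ballI finite_atLeastAtMost)
    fix i k assume i: "i \<in> {1..n}" and k: "k \<in> {1..n}"
    show "AE \<omega> in M. i \<noteq> k \<longrightarrow> X i \<omega> \<noteq> X k \<omega>"
    proof (cases "i = k")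
      case False
      have sN: "{\<omega> \<in> space M. X i \<omega> = X k \<omega>} \<in> sets M"
        using Xm[OF i] Xm[OF k] by measurable
      have "AE \<omega> in M. X i \<omega> \<noteq> X k \<omega>"
        using AE_iff_measurable[OF sN, of "\<lambda>\<omega>. X i \<omega> \<noteq> X k \<omega>"] assms(5)[OF i k False]
          emeasure_eq_measure by simp
      then show ?thesis by (auto elim: AE_mp)
    qed simp
  qed
  have AEeq: "AE \<omega> in M. \<omega> \<in> {\<omega> \<in> space M. Q \<omega>} \<longleftrightarrow> \<omega> \<in> (\<Union>A\<in>P. E A)"
    using AEnn AEd
  proof eventually_elim
    case (elim \<omega>)
    have "Q \<omega> \<longleftrightarrow> (\<exists>A\<in>Pow ({1..n}-{j}). phi (A \<union> {j}) \<and> \<not> phi A \<and>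
          (\<forall>i\<in>{1..n}-(A\<union>{j}). X i \<omega> < X j \<omega>) \<and> (\<forall>i\<in>A. X j \<omega> < X i \<omega>))"
      unfolding Q_def by (rule char_good[OF mono phin j, of "\<lambda>i. X i \<omega>", OF elim(1) elim(2)])
    also have "\<dots> \<longleftrightarrow> (\<exists>A\<in>P. (\<forall>i\<in>{1..n}-(A\<union>{j}). X i \<omega> < X j \<omega>) \<and> (\<forall>i\<in>A. X j \<omega> < X i \<omega>))"
      unfolding P_def by blast
    finally have "Q \<omega> \<longleftrightarrow> (\<exists>A\<in>P. (\<forall>i\<in>{1..n}-(A\<union>{j}). X i \<omega> < X j \<omega>) \<and> (\<forall>i\<in>A. X j \<omega> < X i \<omega>))" .
    moreover have "\<omega> \<in> (\<Union>A\<in>P. E A) \<longleftrightarrow> \<omega> \<in> space M \<and> (\<exists>A\<in>P. (\<forall>i\<in>{1..n}-(A\<union>{j}). X i \<omega> < X j \<omega>) \<and> (\<forall>i\<in>A. X j \<omega> < X i \<omega>))"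
      unfolding E_def by blast
    ultimately show ?case by blast
  qed
  have eq1: "measure M {\<omega> \<in> space M. system_lifetime n phi X \<omega> = X j \<omega>} = (\<Sum>A\<in>P. qj M n X j A)"
    unfolding evT qjE U[symmetric]
    using AEeq Qm finP Em by (intro measure_eq_AE) auto
  have sum1: "(\<Sum>A \<in> Pow ({1..n} - {j}). qj M n X j A * (of_bool (phi (A \<union> {j})) - of_bool (phi A)))
     = (\<Sum>A\<in>P. qj M n X j A)"
  proof -
    have "(\<Sum>A \<in> Pow ({1..n} - {j}). qj M n X j A * (of_bool (phi (A \<union> {j})) - of_bool (phi A)))
       = (\<Sum>A \<in> Pow ({1..n} - {j}). if phi (A \<union> {j}) \<and> \<not> phi A then qj M n X j A else 0)"
    proof (rule sum.cong)
      fix A assume A: "A \<in> Pow ({1..n} - {j})"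
      have sub: "A \<subseteq> A \<union> {j} \<and> A \<union> {j} \<subseteq> {1..n}" using A j by auto
      have "phi A \<longrightarrow> phi (A \<union> {j})" using mono sub by blast
      then show "qj M n X j A * (of_bool (phi (A \<union> {j})) - of_bool (phi A)) =
          (if phi (A \<union> {j}) \<and> \<not> phi A then qj M n X j A else 0)"
        by (cases "phi A"; cases "phi (A \<union> {j})") simp_all
    qed simp
    also have "\<dots> = (\<Sum>A\<in>P. qj M n X j A)"
      unfolding P_def by (rule sum.inter_filter[symmetric]) simp
    finally show ?thesis .
  qed
  have sum2: "(\<Sum>A \<in> Pow ({1..n} - {j}).
                qj M n X j A * (of_bool (phi (A \<union> {j})) - of_bool (phi A)))
           = (\<Sum>A \<in> Pow {1..n}.
                (-1) ^ card ({j} - A) * qj M n X j (A - {j}) * of_bool (phi A))"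
  proof -
    define R where "R = {1..n} - {j}"
    have nR: "{1..n} = insert j R" using j R_def by auto
    have fR: "finite R" "j \<notin> R" using R_def by auto
    have "(\<Sum>A \<in> Pow {1..n}. (-1) ^ card ({j} - A) * qj M n X j (A - {j}) * of_bool (phi A))
      = (\<Sum>A\<in>Pow R. (-1) ^ card ({j} - A) * qj M n X j (A - {j}) * of_bool (phi A))
        + (\<Sum>A\<in>Pow R. (-1) ^ card ({j} - insert j A) * qj M n X j (insert j A - {j}) * of_bool (phi (insert j A)))"
      unfolding nR by (rule sum_Pow_insert[OF fR])
    also have "(\<Sum>A\<in>Pow R. (-1) ^ card ({j} - A) * qj M n X j (A - {j}) * of_bool (phi A))
       = (\<Sum>A\<in>Pow R. - (qj M n X j A * of_bool (phi A)))"
    proof (rule sum.cong)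
      fix A assume "A \<in> Pow R"
      then have "j \<notin> A" using fR by auto
      then show "(-1) ^ card ({j} - A) * qj M n X j (A - {j}) * of_bool (phi A) = - (qj M n X j A * of_bool (phi A))"
        by (simp add: insert_Diff_if)
    qed simp
    also have "(\<Sum>A\<in>Pow R. (-1) ^ card ({j} - insert j A) * qj M n X j (insert j A - {j}) * of_bool (phi (insert j A)))
       = (\<Sum>A\<in>Pow R. qj M n X j A * of_bool (phi (A \<union> {j})))"
    proof (rule sum.cong)
      fix A assume "A \<in> Pow R"
      then have "j \<notin> A" using fR by auto
      then show "(-1) ^ card ({j} - insert j A) * qj M n X j (insert j A - {j}) * of_bool (phi (insert j A))
          = qj M n X j A * of_bool (phi (A \<union> {j}))"
        by (simp add: insert_Diff_if)
    qed simp
    finally have F: "(\<Sum>A \<in> Pow {1..n}. (-1) ^ card ({j} - A) * qj M n X j (A - {j}) * of_bool (phi A))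
      = (\<Sum>A\<in>Pow R. - (qj M n X j A * of_bool (phi A))) + (\<Sum>A\<in>Pow R. qj M n X j A * of_bool (phi (A \<union> {j})))" .
    have G: "(\<Sum>A\<in>Pow R. qj M n X j A * (of_bool (phi (A \<union> {j})) - of_bool (phi A)))
      = (\<Sum>A\<in>Pow R. - (qj M n X j A * of_bool (phi A))) + (\<Sum>A\<in>Pow R. qj M n X j A * of_bool (phi (A \<union> {j})))"
      by (simp add: right_diff_distrib sum_subtractf sum_negf)
    show ?thesis unfolding R_def[symmetric] F G ..
  qed
  show ?thesis using eq1 sum1 sum2 by simp
qed

end
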